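(* Let $k\ge2$ and $\Delta\ge 2^{4^k+1}$ be integers. Let $Q=\{Q_1,\dots,Q_\Delta\}$ be an arbitrary multiset in $h_1(\Delta)$ (as defined in the context). Then there is a unique element $P_\infty\in Q$ that has multiplicity at least $\Delta-2^{4^k}$ in $Q$ and contains the trit sequence $11\dots1$ (of length $k$).
   Context: A trit sequence of length $k$ is a word $a_1\dots a_k$ with $a_j\in\{0,1,2\}$; it "has an $i$ at position $j$" if $a_j=i$. $h_1(\Delta)$ is the set of all multisets $\{W_1,\dots,W_\Delta\}$ (of cardinality $\Delta$) of sets $W_i$ of trit sequences of length $k$ such that (A) for any choice $w_1\in W_1,\dots,w_\Delta\in W_\Delta$ there is an index $1\le j\le k$ such that the number of $w_i$ with a $2$ at position $j$ is strictly greater than the number of $w_i$ with a $0$ at position $j$, and at most $k$ of the $w_i$ have a $0$ at position $j$; and (B) the multiset is maximal with property (A): adding any new trit sequence of length $k$ to any single $W_i$ yields a multiset violating (A). (This is the node-constraint of the problem obtained by applying one round of the simplified speedup transformation to superweak $k$-coloring.) *)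

theory Defs
  imports Main "HOL-Library.Multiset"
begin

datatype trit = T0 | T1 | T2

definition trit_seqs :: "nat \<Rightarrow> trit list set" where
  "trit_seqs k = {w. length w = k}"

definition cnt_at :: "trit list multiset \<Rightarrow> nat \<Rightarrow> trit \<Rightarrow> nat" where
  "cnt_at C j a = size (filter_mset (\<lambda>w. w ! j = a) C)"

text \<open>Property (A): for every choice of one word from each (copy of each) set in the
  multiset M (a choice is a multiset C related elementwise to M by membership),
  there is a position j where the 2s strictly outnumber the 0s and at most k zeros occur.\<close>
definition propA :: "nat \<Rightarrow> trit list set multiset \<Rightarrow> bool" where
  "propA k M \<longleftrightarrow>
     (\<forall>C. rel_mset (\<lambda>w W. w \<in> W) C M \<longrightarrow>
        (\<exists>j<k. cnt_at C j T2 > cnt_at C j T0 \<and> cnt_at C j T0 \<le> k))"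

definition propB :: "nat \<Rightarrow> trit list set multiset \<Rightarrow> bool" where
  "propB k M \<longleftrightarrow>
     (\<forall>W w. W \<in># M \<longrightarrow> w \<in> trit_seqs k \<longrightarrow> w \<notin> W \<longrightarrow>
        \<not> propA k (M - {#W#} + {#insert w W#}))"

definition h1 :: "nat \<Rightarrow> nat \<Rightarrow> trit list set multiset set" where
  "h1 k \<Delta> = {M. size M = \<Delta> \<and> (\<forall>W\<in>#M. W \<subseteq> trit_seqs k) \<and> propA k M \<and> propB k M}"

end

theory Submission
  imports Defs
begin

definition good :: "nat \<Rightarrow> trit list multiset \<Rightarrow> bool" where
  "good k C \<longleftrightarrow> (\<exists>j<k. cnt_at C j T2 > cnt_at C j T0 \<and> cnt_at C j T0 \<le> k)"

lemma cnt_add: "cnt_at (add_mset w C) j a = cnt_at C j a + (if w ! j = a then 1 else 0)"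
  by (simp add: cnt_at_def)

lemma cnt_rem: "x \<in># C \<Longrightarrow> cnt_at C j a = cnt_at (C - {#x#}) j a + (if x ! j = a then 1 else 0)"
  by (metis cnt_add insert_DiffM)

lemma good_one: "good k (add_mset (replicate k T1) C) \<longleftrightarrow> good k C"
  unfolding good_def by (auto simp: cnt_add)

lemma propA_good: "propA k M \<Longrightarrow> rel_mset (\<lambda>w W. w \<in> W) C M \<Longrightarrow> good k C"
  unfolding propA_def good_def by blast

lemma extract_D:
  assumes "rel_mset R C M"
  shows "\<exists>D. D \<subseteq># C \<and> size D = count M X \<and>
     (\<forall>x\<in>#D. R x X \<and> rel_mset R (C - {#x#}) (M - {#X#}))"
  using assms
proof (induction rule: rel_mset_induct)
  case empty
  then show ?case by (auto intro!: exI[of _ "{#}"])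
next
  case (add R a b C M)
  then obtain D where D: "D \<subseteq># C" "size D = count M X"
     "\<forall>x\<in>#D. R x X \<and> rel_mset R (C - {#x#}) (M - {#X#})" by blast
  show ?case
  proof (cases "b = X")
    case True
    show ?thesis
    proof (rule exI[of _ "add_mset a D"], intro conjI; (intro ballI)?)
      show "add_mset a D \<subseteq># add_mset a C" using D(1) by simp
      show "size (add_mset a D) = count (add_mset b M) X" using D(2) True by simp
    next
      fix x assume x: "x \<in># add_mset a D"
      show "R x X \<and> rel_mset R (add_mset a C - {#x#}) (add_mset b M - {#X#})"
      proof (cases "x \<in># D")
        case True
        have xC: "x \<in># C" using D(1) True by (meson mset_subset_eqD)
        have "count M X > 0" using D(2) True
          by (metis gr0I size_eq_0_iff_empty empty_iff set_mset_empty)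
        hence XM: "X \<in># M" by simp
        have "rel_mset R (add_mset a (C - {#x#})) (add_mset b (M - {#X#}))"
          using rel_mset_Plus[of R a b "C - {#x#}" "M - {#X#}"] add.hyps(1) D(3) True by blast
        moreover have "add_mset a (C - {#x#}) = add_mset a C - {#x#}" using xC by simp
        moreover have "add_mset b (M - {#X#}) = add_mset b M - {#X#}"
          using XM \<open>b = X\<close> by simp
        ultimately show ?thesis using D(3) True by auto
      next
        case False
        hence "x = a" using x by simp
        thus ?thesis using add.hyps \<open>b = X\<close> by simp
      qed
    qed
  next
    case False
    show ?thesis
    proof (rule exI[of _ D], intro conjI; (intro ballI)?)
      show "D \<subseteq># add_mset a C" using D(1) by (simp add: subset_mset.order_trans)
      show "size D = count (add_mset b M) X" using D(2) False by simp
    next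
      fix x assume x: "x \<in># D"
      have xC: "x \<in># C" using D(1) x by (meson mset_subset_eqD)
      have "rel_mset R (add_mset a (C - {#x#})) (add_mset b (M - {#X#}))"
        using rel_mset_Plus[of R a b "C - {#x#}" "M - {#X#}"] add.hyps(1) D(3) x by blast
      moreover have "add_mset a (C - {#x#}) = add_mset a C - {#x#}" using xC by simp
      moreover have "add_mset b (M - {#X#}) = add_mset b M - {#X#}"
        using False by simp
      ultimately show "R x X \<and> rel_mset R (add_mset a C - {#x#}) (add_mset b M - {#X#})"
        using D(3) x by auto
    qed
  qed
qed

lemma size_le_sum:
  assumes "finite J" "\<forall>x\<in>#D. \<exists>j\<in>J. P j x"
  shows "size D \<le> (\<Sum>j\<in>J. size (filter_mset (P j) D))"
  using assms(2)
proof (induction D)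
  case empty
  then show ?case by simp
next
  case (add x D)
  then obtain j0 where j0: "j0 \<in> J" "P j0 x" by auto
  have "(\<Sum>j\<in>J. size (filter_mset (P j) (add_mset x D))) =
        (\<Sum>j\<in>J. size (filter_mset (P j) D)) + (\<Sum>j\<in>J. if P j x then 1 else 0)"
    by (subst sum.distrib[symmetric]) (rule sum.cong, auto)
  moreover have "(\<Sum>j\<in>J. if P j x then 1 else (0::nat)) \<ge> 1"
  proof -
    have "(\<Sum>j\<in>J. if P j x then 1 else (0::nat)) \<ge> (if P j0 x then 1 else 0)"
      using member_le_sum[of j0 J "\<lambda>j. if P j x then 1 else (0::nat)"] assms(1) j0(1) by simp
    thus ?thesis using j0 by simp
  qed
  ultimately show ?case using add by simp
qed

lemma count_bound:
  assumes "D \<subseteq># C" "\<forall>x\<in>#D. \<exists>j<k. x ! j = a \<and> cnt_at C j a \<le> b"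
  shows "size D \<le> k * b"
proof -
  let ?J = "{j. j < k \<and> cnt_at C j a \<le> b}"
  have "size D \<le> (\<Sum>j\<in>?J. size (filter_mset (\<lambda>x. x ! j = a) D))"
    by (rule size_le_sum) (use assms(2) in auto)
  also have "\<dots> \<le> (\<Sum>j\<in>?J. b)"
  proof (rule sum_mono)
    fix j assume j: "j \<in> ?J"
    have "size (filter_mset (\<lambda>x. x ! j = a) D) \<le> size (filter_mset (\<lambda>x. x ! j = a) C)"
      by (intro size_mset_mono multiset_filter_mono assms(1))
    thus "size (filter_mset (\<lambda>x. x ! j = a) D) \<le> b" using j by (simp add: cnt_at_def)
  qed
  also have "\<dots> = card ?J * b" by simp
  also have "\<dots> \<le> k * b"
  proof -
    have "card ?J \<le> card {..<k}" by (rule card_mono) auto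
    thus ?thesis by simp
  qed
  finally show ?thesis .
qed


lemma h1_D:
  assumes "Q \<in> h1 k \<Delta>"
  shows "size Q = \<Delta>" "\<And>W. W \<in># Q \<Longrightarrow> W \<subseteq> trit_seqs k" "propA k Q" "propB k Q"
  using assms unfolding h1_def by auto

lemma rep_in: "replicate k T1 \<in> trit_seqs k"
  by (simp add: trit_seqs_def)

lemma nonT_bound:
  assumes Q: "Q \<in> h1 k \<Delta>" and XQ: "X \<in># Q" and nX: "replicate k T1 \<notin> X"
  shows "count Q X \<le> k * k + 1"
proof -
  let ?R = "\<lambda>w W. w \<in> W"
  let ?o = "replicate k T1"
  have "\<not> propA k (Q - {#X#} + {#insert ?o X#})"
    using h1_D(4)[OF Q] XQ nX rep_in unfolding propB_def by blast
  then obtain C where C: "rel_mset ?R C (add_mset (insert ?o X) (Q - {#X#}))" "\<not> good k C"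
    unfolding propA_def good_def by auto
  obtain C1 a where C1: "C = add_mset a C1" "a \<in> insert ?o X" "rel_mset ?R C1 (Q - {#X#})"
    using msed_rel_invR[OF C(1)] by blast
  have QX: "add_mset X (Q - {#X#}) = Q" using XQ by simp
  have "a \<notin> X"
  proof
    assume "a \<in> X"
    hence "rel_mset ?R C Q" using rel_mset_Plus[of ?R a X C1 "Q - {#X#}"] C1 QX by simp
    thus False using propA_good[OF h1_D(3)[OF Q]] C(2) by blast
  qed
  hence "a = ?o" using C1(2) by simp
  hence bad: "\<not> good k C1" using C(2) C1(1) good_one by simp
  obtain D where D: "D \<subseteq># C1" "size D = count (Q - {#X#}) X"
     "\<forall>x\<in>#D. x \<in> X \<and> rel_mset ?R (C1 - {#x#}) (Q - {#X#} - {#X#})"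
    using extract_D[OF C1(3), of X] by blast
  have "size D \<le> k * k"
  proof (rule count_bound[OF D(1)], intro ballI)
    fix x assume x: "x \<in># D"
    hence "rel_mset ?R (add_mset x C1) Q"
      using rel_mset_Plus[of ?R x X C1 "Q - {#X#}"] C1(3) D(3) QX by simp
    hence "good k (add_mset x C1)" using propA_good[OF h1_D(3)[OF Q]] by blast
    then obtain j where j: "j < k" "cnt_at (add_mset x C1) j T2 > cnt_at (add_mset x C1) j T0"
       "cnt_at (add_mset x C1) j T0 \<le> k" unfolding good_def by blast
    have nb: "\<not> (cnt_at C1 j T2 > cnt_at C1 j T0 \<and> cnt_at C1 j T0 \<le> k)"
      using bad j(1) unfolding good_def by blast
    show "\<exists>j<k. x ! j = T2 \<and> cnt_at C1 j T2 \<le> k"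
    proof (intro exI conjI)
      show "j < k" by fact
      show "x ! j = T2" using j nb by (cases "x ! j") (auto simp: cnt_add)
      then show "cnt_at C1 j T2 \<le> k" using j nb by (auto simp: cnt_add)
    qed
  qed
  moreover have "count (Q - {#X#}) X = count Q X - 1" by simp
  moreover have "count Q X \<ge> 1" using XQ by simp
  ultimately show ?thesis using D(2) by linarith
qed

lemma sub_bound:
  assumes Q: "Q \<in> h1 k \<Delta>" and AQ: "A \<in># Q" and BQ: "B \<in># Q"
    and nAB: "\<not> A \<subseteq> B" and oB: "replicate k T1 \<in> B"
  shows "count Q A \<le> k * (k + 1)"
proof -
  let ?R = "\<lambda>w W. w \<in> W"
  let ?o = "replicate k T1"
  obtain a where a: "a \<in> A" "a \<notin> B" using nAB by blast
  have aT: "a \<in> trit_seqs k" using h1_D(2)[OF Q AQ] a(1) by blast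
  have "\<not> propA k (Q - {#B#} + {#insert a B#})"
    using h1_D(4)[OF Q] BQ a aT unfolding propB_def by blast
  then obtain C where C: "rel_mset ?R C (add_mset (insert a B) (Q - {#B#}))" "\<not> good k C"
    unfolding propA_def good_def by auto
  obtain C1 a' where C1: "C = add_mset a' C1" "a' \<in> insert a B" "rel_mset ?R C1 (Q - {#B#})"
    using msed_rel_invR[OF C(1)] by blast
  have QB: "add_mset B (Q - {#B#}) = Q" using BQ by simp
  have "a' \<notin> B"
  proof
    assume "a' \<in> B"
    hence "rel_mset ?R C Q" using rel_mset_Plus[of ?R a' B C1 "Q - {#B#}"] C1 QB by simp
    thus False using propA_good[OF h1_D(3)[OF Q]] C(2) by blast
  qed
  hence a'a: "a' = a" using C1(2) by simp
  have AB: "A \<noteq> B" using nAB by blast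
  obtain D where D: "D \<subseteq># C1" "size D = count (Q - {#B#}) A"
     "\<forall>x\<in>#D. x \<in> A \<and> rel_mset ?R (C1 - {#x#}) (Q - {#B#} - {#A#})"
    using extract_D[OF C1(3), of A] by blast
  have DC: "D \<subseteq># C" using D(1) C1(1) by (simp add: subset_mset.order_trans)
  have AQB: "A \<in># Q - {#B#}" using AQ AB by (simp add: in_diff_count)
  have "size D \<le> k * (k + 1)"
  proof (rule count_bound[OF DC], intro ballI)
    fix x assume x: "x \<in># D"
    have xC1: "x \<in># C1" using D(1) x by (meson mset_subset_eqD)
    let ?E = "add_mset ?o (add_mset a (C1 - {#x#}))"
    have "rel_mset ?R (add_mset a (C1 - {#x#})) (add_mset A (Q - {#B#} - {#A#}))"
      using rel_mset_Plus[of ?R a A "C1 - {#x#}" "Q - {#B#} - {#A#}"] D(3) x a(1) by simp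
    hence "rel_mset ?R ?E (add_mset B (add_mset A (Q - {#B#} - {#A#})))"
      using rel_mset_Plus[of ?R ?o B] oB by simp
    moreover have "add_mset B (add_mset A (Q - {#B#} - {#A#})) = Q" by (metis AQB QB insert_DiffM)
    ultimately have "good k ?E" using propA_good[OF h1_D(3)[OF Q]] by simp
    hence "good k (add_mset a (C1 - {#x#}))" using good_one by blast
    then obtain j where j: "j < k"
       "cnt_at (add_mset a (C1 - {#x#})) j T2 > cnt_at (add_mset a (C1 - {#x#})) j T0"
       "cnt_at (add_mset a (C1 - {#x#})) j T0 \<le> k" unfolding good_def by blast
    have nb: "\<not> (cnt_at C j T2 > cnt_at C j T0 \<and> cnt_at C j T0 \<le> k)"
      using C(2) j(1) unfolding good_def by blast
    have eq: "cnt_at C j t = cnt_at (add_mset a (C1 - {#x#})) j t + (if x ! j = t then 1 else 0)" for t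
      using cnt_rem[OF xC1, of j t] C1(1) a'a by (simp add: cnt_add)
    show "\<exists>j<k. x ! j = T0 \<and> cnt_at C j T0 \<le> k + 1"
    proof (intro exI conjI)
      show "j < k" by fact
      show "x ! j = T0" using j nb eq[of T0] eq[of T2] by (cases "x ! j") auto
      then show "cnt_at C j T0 \<le> k + 1" using j eq[of T0] by auto
    qed
  qed
  thus ?thesis using D(2) AB by simp
qed


lemma num_aux: "2 \<le> k \<Longrightarrow> 3 ^ k + 2 * k \<le> (4::nat) ^ k"
proof (induction k rule: nat_induct_at_least)
  case base
  then show ?case by simp
next
  case (Suc n)
  have "(3::nat) ^ n \<ge> 1" by simp
  then show ?case using Suc by simp
qed

lemma num: "2 \<le> k \<Longrightarrow> 2 ^ (3 ^ k) * (k * (k + 1)) \<le> (2::nat) ^ (4 ^ k)"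
proof -
  assume k: "2 \<le> k"
  have "k < 2 ^ k" by (rule less_exp)
  have a: "k \<le> 2 ^ k" by (rule less_imp_le[OF less_exp])
  have b: "k + 1 \<le> 2 ^ k" using Suc_leI[OF less_exp[of k]] by simp
  have "k * (k + 1) \<le> 2 ^ k * 2 ^ k" by (rule mult_le_mono[OF a b])
  also have "\<dots> = 2 ^ (2 * k)" by (simp add: power_add[symmetric] mult_2)
  finally have "2 ^ (3 ^ k) * (k * (k + 1)) \<le> 2 ^ (3 ^ k) * (2::nat) ^ (2 * k)" by simp
  also have "\<dots> = 2 ^ (3 ^ k + 2 * k)" by (simp add: power_add)
  also have "\<dots> \<le> 2 ^ (4 ^ k)" using num_aux[OF k] by (intro power_increasing) auto
  finally show ?thesis .
qed

lemma card_trit_seqs: "card (trit_seqs k) = 3 ^ k" "finite (trit_seqs k)"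
proof -
  have U: "{T0, T1, T2} = (UNIV :: trit set)" using trit.exhaust by blast
  have eq: "trit_seqs k = {xs. set xs \<subseteq> {T0, T1, T2} \<and> length xs = k}"
    unfolding trit_seqs_def U by simp
  show "card (trit_seqs k) = 3 ^ k" unfolding eq by (simp add: card_lists_length_eq numeral_3_eq_3)
  show "finite (trit_seqs k)" unfolding eq by (simp add: finite_lists_length_eq)
qed

lemma card_setQ:
  assumes Q: "Q \<in> h1 k \<Delta>"
  shows "card (set_mset Q) \<le> 2 ^ (3 ^ k)"
proof -
  have "set_mset Q \<subseteq> Pow (trit_seqs k)" using h1_D(2)[OF Q] by blast
  hence "card (set_mset Q) \<le> card (Pow (trit_seqs k))"
    by (intro card_mono) (auto simp: card_trit_seqs)
  thus ?thesis by (simp add: card_Pow card_trit_seqs)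
qed

lemma size_eq_sum: "size Q = (\<Sum>A\<in>set_mset Q. count Q A)"
  by (simp add: size_multiset_overloaded_eq)

theorem lemma5:
  fixes k \<Delta> :: nat and Q :: "trit list set multiset"
  assumes "k \<ge> 2" and "\<Delta> \<ge> 2 ^ (4 ^ k + 1)" and "Q \<in> h1 k \<Delta>"
  shows "\<exists>!P. P \<in># Q \<and> count Q P \<ge> \<Delta> - 2 ^ (4 ^ k) \<and> replicate k T1 \<in> P"
proof -
  note Q = assms(3)
  let ?b = "k * (k + 1)"
  let ?S = "set_mset Q"
  have N: "2 ^ (3 ^ k) * ?b \<le> (2::nat) ^ (4 ^ k)" using num assms(1) by blast
  have sz: "size Q = \<Delta>" using h1_D(1)[OF Q] .
  have bpos: "?b > 0" using assms(1) by simp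
  have big: "\<Delta> \<ge> 2 * 2 ^ (4 ^ k)" using assms(2) by simp
  have "\<exists>P\<in>?S. count Q P > ?b"
  proof (rule ccontr)
    assume "\<not> ?thesis"
    hence "\<forall>P\<in>?S. count Q P \<le> ?b" by auto
    hence "size Q \<le> (\<Sum>A\<in>?S. ?b)" unfolding size_eq_sum by (intro sum_mono) auto
    also have "\<dots> = card ?S * ?b" by simp
    also have "\<dots> \<le> 2 ^ (3 ^ k) * ?b" using card_setQ[OF Q] by simp
    finally have "\<Delta> \<le> 2 ^ (4 ^ k)" using N sz by simp
    moreover have "(2::nat) ^ (4 ^ k) > 0" by simp
    ultimately show False using big by simp
  qed
  then obtain P where P: "P \<in># Q" "count Q P > ?b" by blast
  have oP: "replicate k T1 \<in> P"
  proof (rule ccontr)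
    assume "replicate k T1 \<notin> P"
    hence "count Q P \<le> k * k + 1" using nonT_bound[OF Q P(1)] by blast
    moreover have "k * k + 1 \<le> ?b" using assms(1) by simp
    ultimately show False using P(2) by simp
  qed
  have others: "count Q A \<le> ?b" if A: "A \<in># Q" "A \<noteq> P" for A
  proof (cases "A \<subseteq> P")
    case False
    then show ?thesis using sub_bound[OF Q A(1) P(1) False oP] by simp
  next
    case True
    hence nPA: "\<not> P \<subseteq> A" using A(2) by blast
    show ?thesis
    proof (cases "replicate k T1 \<in> A")
      case True
      then show ?thesis using sub_bound[OF Q P(1) A(1) nPA True] P(2) by simp
    next
      case False
      hence "count Q A \<le> k * k + 1" using nonT_bound[OF Q A(1)] by blast
      moreover have "k * k + 1 \<le> ?b" using assms(1) by simp
      ultimately show ?thesis by simp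
    qed
  qed
  have "\<Delta> = count Q P + (\<Sum>A\<in>?S - {P}. count Q A)"
    using sz P(1) unfolding size_eq_sum by (simp add: sum.remove)
  also have "(\<Sum>A\<in>?S - {P}. count Q A) \<le> (\<Sum>A\<in>?S - {P}. ?b)"
    using others by (intro sum_mono) auto
  also have "\<dots> = card (?S - {P}) * ?b" by simp
  also have "\<dots> \<le> 2 ^ (3 ^ k) * ?b"
  proof -
    have "card (?S - {P}) \<le> card ?S" by (intro card_mono) auto
    thus ?thesis using card_setQ[OF Q] by (intro mult_le_mono1) linarith
  qed
  finally have cP: "count Q P \<ge> \<Delta> - 2 ^ (4 ^ k)" using N by linarith
  show ?thesis
  proof (rule ex1I[of _ P])
    show "P \<in># Q \<and> count Q P \<ge> \<Delta> - 2 ^ (4 ^ k) \<and> replicate k T1 \<in> P"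
      using P(1) cP oP by blast
  next
    fix P' assume P': "P' \<in># Q \<and> count Q P' \<ge> \<Delta> - 2 ^ (4 ^ k) \<and> replicate k T1 \<in> P'"
    have "(2::nat) ^ 1 \<le> 2 ^ (3 ^ k)" by (intro power_increasing) auto
    hence "(2::nat) ^ (3 ^ k) \<ge> 2" by simp
    hence "2 ^ (3 ^ k) * ?b \<ge> 2 * ?b" by (intro mult_le_mono1)
    hence "count Q P' > ?b" using P' N big bpos by linarith
    thus "P' = P" using others P' by force
  qed
qed

end
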